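(* Let $\Sigma$ be a finite alphabet. If $L \subseteq \Sigma^*$ has growth $g(n)$, then $F_L(n) \in \mathcal{O}(\log g(n) + \log n)$.
   Context: The growth of $L$ is $g(n)=|\{x\in L : |x|\le n\}|$. $\log x=\lfloor\log_2 x\rfloor$. Fixed-size sliding window model: fix $a\in\Sigma$; $\mathrm{last}_n(a_1\cdots a_m)=a_{m-n+1}\cdots a_m$ if $n\le m$, else $a^{n-m}a_1\cdots a_m$. A fixed-size sliding window algorithm for $L$ is a sequence $(\mathcal{A}_n)_{n\ge0}$ of deterministic (possibly infinite-state) automata with injective encodings of their states into bit strings, $\mathcal{A}_n$ accepting $\{w:\mathrm{last}_n(w)\in L\}$; its space complexity at $n$ is the maximal encoding length of a state of $\mathcal{A}_n$. $F_L(n)$ is the minimal space complexity at $n$ over all such algorithms. *)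

theory Defs
  imports Main "HOL-Library.Discrete_Functions" "HOL-Library.Extended_Nat"
begin

definition growth :: "'a list set \<Rightarrow> nat \<Rightarrow> nat" where
  "growth L n = card {x \<in> L. length x \<le> n}"

definition last_win :: "'a \<Rightarrow> nat \<Rightarrow> 'a list \<Rightarrow> 'a list" where
  "last_win a n w = (if n \<le> length w then drop (length w - n) w
                     else replicate (n - length w) a @ w)"

record ('q, 'a) dfa =
  states :: "'q set"
  init   :: "'q"
  delta  :: "'q \<Rightarrow> 'a \<Rightarrow> 'q"
  final  :: "'q set"
  enc    :: "'q \<Rightarrow> bool list"

definition wf_dfa :: "('q, 'a) dfa \<Rightarrow> bool" where
  "wf_dfa A \<longleftrightarrow> init A \<in> states A \<and> final A \<subseteq> states A \<and>
     (\<forall>q \<in> states A. \<forall>c. delta A q c \<in> states A) \<and> inj_on (enc A) (states A)"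

definition run :: "('q, 'a) dfa \<Rightarrow> 'a list \<Rightarrow> 'q" where
  "run A w = fold (\<lambda>c q. delta A q c) w (init A)"

definition accepted :: "('q, 'a) dfa \<Rightarrow> 'a list set" where
  "accepted A = {w. run A w \<in> final A}"

definition space :: "('q, 'a) dfa \<Rightarrow> enat" where
  "space A = (SUP q \<in> states A. enat (length (enc A q)))"

text \<open>A is a valid n-th component of a fixed-size sliding window algorithm for L.\<close>
definition sw_automaton :: "'a list set \<Rightarrow> 'a \<Rightarrow> nat \<Rightarrow> ('q, 'a) dfa \<Rightarrow> bool" where
  "sw_automaton L a n A \<longleftrightarrow> wf_dfa A \<and> accepted A = {w. last_win a n w \<in> L}"

text \<open>F_L(n): minimal space complexity at n.  Since the encoding is injective into
  bit strings, the state set is countable, so states of type nat lose no generality.\<close>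
definition F_space :: "'a list set \<Rightarrow> 'a \<Rightarrow> nat \<Rightarrow> enat" where
  "F_space L a n = (INF A \<in> {A :: (nat, 'a) dfa. sw_automaton L a n A}. space A)"

end

theory Submission imports Defs "HOL-Library.Sublist" begin

definition gsuf :: "'a list set \<Rightarrow> 'a list \<Rightarrow> 'a list" where
  "gsuf Q z = (SOME s. s \<in> Q \<and> suffix s z \<and> (\<forall>t. t \<in> Q \<and> suffix t z \<longrightarrow> length t \<le> length s))"

lemma gsuf_ex:
  assumes "[] \<in> Q"
  shows "\<exists>s. s \<in> Q \<and> suffix s z \<and> (\<forall>t. t \<in> Q \<and> suffix t z \<longrightarrow> length t \<le> length s)"
proof -
  have "\<exists>x. (x \<in> Q \<and> suffix x z) \<and> (\<forall>y. (y \<in> Q \<and> suffix y z) \<longrightarrow> length y \<le> length x)"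
    apply (rule ex_has_greatest_nat[where k="[]" and b="Suc (length z)"])
    using assms by (auto dest: suffix_length_le simp: less_Suc_eq_le)
  then show ?thesis by blast
qed

lemma gsuf:
  assumes "[] \<in> Q"
  shows "gsuf Q z \<in> Q" "suffix (gsuf Q z) z"
    "\<And>t. t \<in> Q \<Longrightarrow> suffix t z \<Longrightarrow> length t \<le> length (gsuf Q z)"
  using someI_ex[OF gsuf_ex[OF assms, of z]] unfolding gsuf_def by blast+

lemma suffix_eq_len: "suffix s z \<Longrightarrow> suffix t z \<Longrightarrow> length s = length t \<Longrightarrow> s = t"
  by (metis suffix_length_suffix suffix_order.antisym order_refl)

lemma gsuf_snoc:
  assumes "[] \<in> Q" and pc: "\<And>s c. s @ [c] \<in> Q \<Longrightarrow> s \<in> Q"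
  shows "gsuf Q (z @ [c]) = gsuf Q (gsuf Q z @ [c])"
proof -
  let ?h = "gsuf Q z"
  let ?t = "gsuf Q (z @ [c])"
  let ?u = "gsuf Q (?h @ [c])"
  have su: "suffix ?u (z @ [c])"
    by (meson assms(1) gsuf(2) suffix_append suffix_order.trans)
  have 1: "length ?u \<le> length ?t" using gsuf(3)[OF assms(1) gsuf(1)[OF assms(1)] su] .
  have 2: "length ?t \<le> length ?u"
  proof (cases "?t = []")
    case True then show ?thesis by simp
  next
    case False
    then obtain s where s: "?t = s @ [c]" "suffix s z" using gsuf(2)[OF assms(1), of "z@[c]"] by auto
    have "s \<in> Q" using pc gsuf(1)[OF assms(1), of "z@[c]"] s(1) by metis
    then have "length s \<le> length ?h" using gsuf(3)[OF assms(1)] s(2) by blast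
    then have "suffix s ?h" using suffix_length_suffix s(2) gsuf(2)[OF assms(1)] by blast
    then have "suffix ?t (?h @ [c])" using s(1) by simp
    then show ?thesis using gsuf(3)[OF assms(1) gsuf(1)[OF assms(1)]] by blast
  qed
  show ?thesis using 1 2 su gsuf(2)[OF assms(1), of "z@[c]"] suffix_eq_len by (metis le_antisym)
qed

fun bits :: "nat \<Rightarrow> bool list" where
  "bits 0 = []"
| "bits n = odd n # bits (n div 2)"

lemma bits_inj: "bits m = bits n \<Longrightarrow> m = n"
proof (induction m arbitrary: n rule: bits.induct)
  case 1 then show ?case by (cases n) auto
next
  case (2 m)
  show ?case
  proof (cases n)
    case 0 then show ?thesis using 2 by simp
  next
    case (Suc k)
    then have e: "odd (Suc m) = odd n" "Suc m div 2 = n div 2" using 2 by auto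
    have "Suc m = 2 * (Suc m div 2) + Suc m mod 2" by simp
    also have "\<dots> = 2 * (n div 2) + n mod 2" using e by (metis odd_iff_mod_2_eq_one mod2_eq_if)
    also have "\<dots> = n" by simp
    finally show ?thesis .
  qed
qed

lemma bits_len: "length (bits n) \<le> Suc (floor_log n)"
proof (induction n rule: bits.induct)
  case 1 then show ?case by simp
next
  case (2 m)
  show ?case
  proof (cases "Suc m \<ge> 2")
    case True
    have "length (bits (Suc m)) = Suc (length (bits (Suc m div 2)))" by simp
    also have "\<dots> \<le> Suc (Suc (floor_log (Suc m div 2)))" using 2 by simp
    also have "\<dots> = Suc (floor_log (Suc m))" using floor_log_rec[OF True] by (simp only:)
    finally show ?thesis .
  next
    case False then have "m = 0" by simp
    then show ?thesis by simp
  qed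
qed

lemma last_win_alt: "last_win a n w = drop (length w) (replicate n a @ w)"
  unfolding last_win_def by auto

lemma floor_log_lt: "x < 2 ^ m \<Longrightarrow> x \<noteq> 0 \<Longrightarrow> floor_log x < m"
proof -
  assume h: "x < 2^m" and False: "x \<noteq> 0"
  have "2 ^ floor_log x \<le> x" using False floor_log_exp2_le by simp
  then have "(2::nat) ^ floor_log x < 2 ^ m" using h by linarith
  then show ?thesis by simp
qed

lemma arith_bound:
  fixes n G K :: nat
  assumes n: "n \<ge> 2" and K: "K \<le> Suc (G * Suc n)"
  shows "Suc (floor_log K) \<le> 4 * (floor_log G + floor_log n)"
proof -
  define G' where "G' = max G 1"
  have lgG: "floor_log G' = floor_log G" unfolding G'_def by (cases G) auto
  have "K \<le> 2 * n * G'"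
  proof -
    have "G \<le> G'" unfolding G'_def by simp
    then have "Suc (G * Suc n) \<le> Suc (G' * Suc n)" using mult_le_mono1 Suc_le_mono by blast
    also have "\<dots> \<le> 2 * n * G'"
    proof -
      have "G' \<ge> 1" unfolding G'_def by simp
      then have "1 \<le> (n - 1) * G'" using n by simp
      then show ?thesis using n by (simp add: algebra_simps)
    qed
    finally show ?thesis using K by simp
  qed
  then have 1: "floor_log K \<le> floor_log (2 * (n * G'))" using floor_log_le_iff by (simp add: mult.assoc)
  have nz: "n * G' \<noteq> 0" using n unfolding G'_def by simp
  have 2: "floor_log (2 * (n * G')) = Suc (floor_log (n * G'))" using nz by simp
  have "n < 2 * 2 ^ floor_log n" "G' < 2 * 2 ^ floor_log G'" using floor_log_exp2_gt by auto
  then have "n * G' < (2 * 2 ^ floor_log n) * (2 * 2 ^ floor_log G')" by (intro mult_strict_mono) auto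
  also have "\<dots> = 2 ^ (floor_log n + floor_log G' + 2)" by (simp add: power_add)
  finally have 3: "floor_log (n * G') < floor_log n + floor_log G' + 2" using nz by (rule floor_log_lt)
  have "floor_log n \<ge> floor_log 2" using n floor_log_le_iff by blast
  moreover have "floor_log (2::nat) = 1" using floor_log_twice[of 1] by simp
  ultimately have 4: "floor_log n \<ge> 1" by simp
  show ?thesis using 1 2 3 4 lgG by (simp only: distrib_left)
qed

lemma main_bound:
  fixes L :: "('a::finite) list set" and a :: 'a and n :: nat
  shows "F_space L a n \<le> enat (Suc (floor_log (Suc (growth L n * Suc n))))"
proof -
  define Ln where "Ln = {u \<in> L. length u = n}"
  define Q where "Q = insert [] ((\<lambda>(u,k). take k u) ` (Ln \<times> {..n}))"
  have finG: "finite {x \<in> L. length x \<le> n}"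
    by (rule finite_subset[OF _ finite_lists_length_le[OF finite_UNIV, of n]]) auto
  have finLn: "finite Ln" unfolding Ln_def by (rule finite_subset[OF _ finG]) auto
  have cLn: "card Ln \<le> growth L n" unfolding growth_def Ln_def
    by (rule card_mono[OF finG]) auto
  have finQ: "finite Q" unfolding Q_def using finLn by simp
  have "card Q \<le> Suc (card ((\<lambda>(u,k). take k u) ` (Ln \<times> {..n})))"
    unfolding Q_def by (rule card_insert_le_m1) auto
  also have "\<dots> \<le> Suc (card (Ln \<times> {..n}))" using card_image_le[of "Ln \<times> {..n}"] finLn by auto
  also have "\<dots> = Suc (card Ln * Suc n)" by (simp add: card_cartesian_product)
  also have "\<dots> \<le> Suc (growth L n * Suc n)" using cLn mult_le_mono1 Suc_le_mono by blast
  finally have cQ: "card Q \<le> Suc (growth L n * Suc n)" .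
  have Q0: "[] \<in> Q" unfolding Q_def by simp
  have pc: "\<And>s c. s @ [c] \<in> Q \<Longrightarrow> s \<in> Q"
  proof -
    fix s c assume "s @ [c] \<in> Q"
    then obtain u k where uk: "u \<in> Ln" "k \<le> n" "s @ [c] = take k u" unfolding Q_def by auto
    then have "s = take (length s) (take k u)" by (metis append_eq_conv_conj)
    then have "s = take (min (length s) k) u" by (simp add: min.commute)
    then show "s \<in> Q" unfolding Q_def using uk by force
  qed
  have lenQ: "\<And>q. q \<in> Q \<Longrightarrow> length q \<le> n" unfolding Q_def Ln_def by auto
  obtain idx where idx: "bij_betw idx Q {0..<card Q}" using ex_bij_betw_finite_nat[OF finQ] by blast
  have idxin: "\<And>q. q \<in> Q \<Longrightarrow> idx q \<in> {0..<card Q}" using idx bij_betwE by blast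
  have idxinj: "inj_on idx Q" using idx bij_betw_imp_inj_on by blast
  define A :: "(nat, 'a) dfa" where "A = \<lparr>states = {0..<card Q}, init = idx (gsuf Q (replicate n a)),
     delta = (\<lambda>i c. idx (gsuf Q (inv_into Q idx i @ [c]))),
     final = idx ` {q \<in> Q. q \<in> L \<and> length q = n}, enc = bits\<rparr>"
  have runA: "run A w = idx (gsuf Q (replicate n a @ w))" for w
  proof (induction w rule: rev_induct)
    case Nil then show ?case by (simp add: run_def A_def)
  next
    case (snoc c w)
    have "run A (w @ [c]) = delta A (run A w) c" by (simp add: run_def)
    also have "\<dots> = idx (gsuf Q (gsuf Q (replicate n a @ w) @ [c]))"
      using snoc inv_into_f_f[OF idxinj gsuf(1)[OF Q0]] by (simp add: A_def)
    also have "\<dots> = idx (gsuf Q (replicate n a @ w @ [c]))"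
      using gsuf_snoc[OF Q0 pc, where z="replicate n a @ w" and c=c] by simp
    finally show ?case .
  qed
  have acc: "(gsuf Q z \<in> L \<and> length (gsuf Q z) = n) \<longleftrightarrow> drop (length z - n) z \<in> L"
    if "length z \<ge> n" for z
  proof
    assume h: "gsuf Q z \<in> L \<and> length (gsuf Q z) = n"
    have "suffix (drop (length z - n) z) z" by (simp add: suffix_drop)
    then have "gsuf Q z = drop (length z - n) z"
      using suffix_eq_len[OF gsuf(2)[OF Q0]] h that by simp
    then show "drop (length z - n) z \<in> L" using h by simp
  next
    assume h: "drop (length z - n) z \<in> L"
    let ?d = "drop (length z - n) z"
    have ld: "length ?d = n" using that by simp
    have "?d \<in> Q" unfolding Q_def Ln_def using h ld
      by (auto intro!: image_eqI[where x="(?d, n)"])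
    then have "length ?d \<le> length (gsuf Q z)" using gsuf(3)[OF Q0] suffix_drop by blast
    then have "length (gsuf Q z) = n" using lenQ[OF gsuf(1)[OF Q0, of z]] ld by linarith
    moreover have "gsuf Q z = ?d" using suffix_eq_len[OF gsuf(2)[OF Q0] suffix_drop] calculation ld by simp
    ultimately show "gsuf Q z \<in> L \<and> length (gsuf Q z) = n" using h by simp
  qed
  have wf: "wf_dfa A" unfolding wf_dfa_def A_def
    using idxin gsuf(1)[OF Q0] bits_inj by (auto simp: inj_on_def)
  have "accepted A = {w. last_win a n w \<in> L}"
  proof (rule set_eqI)
    fix w
    let ?z = "replicate n a @ w"
    have "w \<in> accepted A \<longleftrightarrow> idx (gsuf Q ?z) \<in> idx ` {q \<in> Q. q \<in> L \<and> length q = n}"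
      unfolding accepted_def runA by (simp add: A_def)
    also have "\<dots> \<longleftrightarrow> gsuf Q ?z \<in> {q \<in> Q. q \<in> L \<and> length q = n}"
      by (rule inj_on_image_mem_iff[OF idxinj]) (auto simp: gsuf(1)[OF Q0])
    also have "\<dots> \<longleftrightarrow> drop (length ?z - n) ?z \<in> L" using acc[of ?z] gsuf(1)[OF Q0] by auto
    also have "\<dots> \<longleftrightarrow> last_win a n w \<in> L" by (simp add: last_win_alt)
    finally show "w \<in> accepted A \<longleftrightarrow> w \<in> {w. last_win a n w \<in> L}" by simp
  qed
  then have sw: "sw_automaton L a n A" using wf by (simp add: sw_automaton_def)
  have "space A \<le> enat (Suc (floor_log (card Q)))" unfolding space_def
  proof (rule SUP_least)
    fix q assume "q \<in> states A"
    then have "q \<le> card Q" by (simp add: A_def)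
    then have "length (bits q) \<le> Suc (floor_log (card Q))"
      using bits_len[of q] floor_log_le_iff[of q "card Q"] by linarith
    then show "enat (length (enc A q)) \<le> enat (Suc (floor_log (card Q)))" by (simp add: A_def)
  qed
  also have "\<dots> \<le> enat (Suc (floor_log (Suc (growth L n * Suc n))))"
    using floor_log_le_iff[OF cQ] by simp
  finally have "space A \<le> \<dots>" .
  moreover have "F_space L a n \<le> space A" unfolding F_space_def
    by (rule INF_lower) (simp add: sw)
  ultimately show ?thesis by (rule order_trans[rotated])
qed

theorem theorem4p3:
  fixes L :: "('a::finite) list set" and a :: 'a
  shows "\<exists>c N. \<forall>n \<ge> N.
           F_space L a n \<le> enat (c * (floor_log (growth L n) + floor_log n))"
proof (intro exI allI impI)
  fix n :: nat assume n: "n \<ge> 2"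
  have "F_space L a n \<le> enat (Suc (floor_log (Suc (growth L n * Suc n))))" by (rule main_bound)
  also have "\<dots> \<le> enat (4 * (floor_log (growth L n) + floor_log n))"
    using arith_bound[OF n order_refl] by simp
  finally show "F_space L a n \<le> enat (4 * (floor_log (growth L n) + floor_log n))" .
qed

end
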